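(* Define polynomials by $P_1(x)=x$, $Q_1(x)=1$, and for $m>1$, $P_m(x)=P_{m-1}(x)^2+Q_{m-1}(x)^2$ and $Q_m(x)=P_{m-1}(x)Q_{m-1}(x)$. For $m\ge1$ let $B_m$ be the $m\times m$ coloring matrix with entries $b_{ij}=1$ if $i\ge j$ and $b_{ij}=0$ if $i<j$, and let $F^{(m)}(x)=\sum_{n\ge1}t_{B_m}^{(m)}(n)x^n$. Then for every $m\ge1$, $$x^{2^{m-1}}\left(\frac{1}{\sqrt{x}}Q_{m+1}\!\left(\frac{F^{(m)}(x)}{\sqrt{x}}\right)-P_{m+1}\!\left(\frac{F^{(m)}(x)}{\sqrt{x}}\right)\right)=0,$$ where the left-hand side, expanded, is a polynomial expression in $x$ and $F^{(m)}(x)$.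
   Context: A plane tree is an unlabeled rooted tree in which the children of every vertex are linearly ordered. A coloring matrix is an $m\times m$ matrix $A=(a_{ij})$ with entries in $\{0,1\}$. An $A$-coloring of a plane tree assigns to each vertex a color in $\{1,\dots,m\}$ such that whenever a vertex of color $j$ is a child of a vertex of color $i$, $a_{ij}=1$. Let $t_A^{(i)}(n)$ be the number of pairs (plane tree with $n$ vertices, $A$-coloring of it) in which the root has color $i$. *)

theory Defs
  imports "HOL-Computational_Algebra.Computational_Algebra"
begin

(* Rooted trees with ordered children whose vertices carry labels of type 'a.
   A plane tree is a "unit ltree" (labels carry no information). *)
datatype 'a ltree = LNode 'a "'a ltree list"

fun nverts :: "'a ltree \<Rightarrow> nat" where
  "nverts (LNode _ ts) = 1 + sum_list (map nverts ts)"

fun lroot :: "'a ltree \<Rightarrow> 'a" where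
  "lroot (LNode c _) = c"

definition shape :: "nat ltree \<Rightarrow> unit ltree" where
  "shape C = map_ltree (\<lambda>_. ()) C"

(* A coloring matrix A of size m x m with 0/1 entries is represented by
   a :: nat => nat => bool, with a i j <-> a_{ij} = 1 (indices 1..m).
   A colouring of a plane tree T is a nat ltree C with shape C = T;
   it is an A-colouring iff all colours lie in {1..m} and whenever a vertex
   of colour j is a child of a vertex of colour i, a i j holds. *)
fun is_A_coloring :: "nat \<Rightarrow> (nat \<Rightarrow> nat \<Rightarrow> bool) \<Rightarrow> nat ltree \<Rightarrow> bool" where
  "is_A_coloring m a (LNode c ts) =
     (c \<in> {1..m} \<and> (\<forall>t\<in>set ts. a c (lroot t) \<and> is_A_coloring m a t))"

definition t_count :: "nat \<Rightarrow> (nat \<Rightarrow> nat \<Rightarrow> bool) \<Rightarrow> nat \<Rightarrow> nat \<Rightarrow> nat" where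
  "t_count m a i n = card {(T :: unit ltree, C :: nat ltree).
      nverts T = n \<and> shape C = T \<and> is_A_coloring m a C \<and> lroot C = i}"

definition B_mat :: "nat \<Rightarrow> nat \<Rightarrow> bool" where
  "B_mat i j = (i \<ge> j)"

definition F_ser :: "nat \<Rightarrow> real fps" where
  "F_ser m = Abs_fps (\<lambda>n. if n \<ge> 1 then real (t_count m B_mat m n) else 0)"

(* P_m, Q_m for m >= 1 (the value at m = 0 is irrelevant) *)
fun PQ :: "nat \<Rightarrow> 'a::comm_ring_1 poly \<times> 'a poly" where
  "PQ 0 = ([:0, 1:], 1)"
| "PQ (Suc 0) = ([:0, 1:], 1)"
| "PQ (Suc (Suc k)) = (let (p, q) = PQ (Suc k) in (p^2 + q^2, p * q))"

definition Pm :: "nat \<Rightarrow> 'a::comm_ring_1 poly" where "Pm m = fst (PQ m)"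
definition Qm :: "nat \<Rightarrow> 'a::comm_ring_1 poly" where "Qm m = snd (PQ m)"

end

theory Submission
  imports Defs
begin

lemma nverts_pos: "nverts C \<ge> 1"
  by (cases C) auto

lemma nverts_map: "nverts (map_ltree f C) = nverts C"
proof (induction C)
  case (LNode c ts)
  then show ?case by (simp add: comp_def cong: map_cong)
qed

lemma lroot_map: "lroot (map_ltree f C) = f (lroot C)"
  by (cases C) auto

definition TT :: "nat \<Rightarrow> nat \<Rightarrow> nat \<Rightarrow> nat ltree set" where
  "TT m c n = {C. is_A_coloring m B_mat C \<and> lroot C = c \<and> nverts C = n}"

lemma t_count_TT: "t_count m B_mat c n = card (TT m c n)"
proof -
  have "{(T :: unit ltree, C :: nat ltree).
      nverts T = n \<and> shape C = T \<and> is_A_coloring m B_mat C \<and> lroot C = c}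
      = (\<lambda>C. (shape C, C)) ` TT m c n"
    by (auto simp: TT_def shape_def nverts_map)
  moreover have "inj_on (\<lambda>C. (shape C, C)) (TT m c n)" by (auto simp: inj_on_def)
  ultimately show ?thesis unfolding t_count_def by (simp add: card_image)
qed

definition VV :: "nat \<Rightarrow> nat \<Rightarrow> nat ltree set" where
  "VV m n = {C. is_A_coloring m B_mat C \<and> nverts C \<le> n}"

lemma mem_le_sum_list: "(x::nat) \<in> set xs \<Longrightarrow> x \<le> sum_list xs"
  by (induction xs) auto

lemma length_le_sum: "(\<forall>x\<in>set xs. (1::nat) \<le> x) \<Longrightarrow> length xs \<le> sum_list xs"
  by (induction xs) auto

lemma finite_VV: "finite (VV m n)"
proof (induction n)
  case 0
  have "VV m 0 = {}" by (auto simp: VV_def) (metis nverts_pos not_one_le_zero le_zero_eq neq0_conv)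
  then show ?case by simp
next
  case (Suc n)
  have "VV m (Suc n) \<subseteq> (\<lambda>(c,ts). LNode c ts) ` ({1..m} \<times> {ts. set ts \<subseteq> VV m n \<and> length ts \<le> n})"
  proof
    fix C assume C: "C \<in> VV m (Suc n)"
    obtain c ts where Cd: "C = LNode c ts" by (cases C)
    have s: "sum_list (map nverts ts) \<le> n" using C Cd by (simp add: VV_def)
    have "set ts \<subseteq> VV m n"
    proof
      fix t assume t: "t \<in> set ts"
      have "nverts t \<le> sum_list (map nverts ts)" using t by (intro mem_le_sum_list) auto
      then show "t \<in> VV m n" using t C Cd s by (auto simp: VV_def)
    qed
    moreover have "length ts \<le> n"
      using length_le_sum[of "map nverts ts"] s nverts_pos by (metis (no_types, lifting) dual_order.trans ex_map_conv length_map)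
    moreover have "c \<in> {1..m}" using C Cd by (simp add: VV_def)
    ultimately show "C \<in> (\<lambda>(c,ts). LNode c ts) ` ({1..m} \<times> {ts. set ts \<subseteq> VV m n \<and> length ts \<le> n})"
      using Cd by auto
  qed
  moreover have "finite {ts. set ts \<subseteq> VV m n \<and> length ts \<le> n}"
    using finite_lists_length_le[OF Suc.IH] by simp
  ultimately show ?case by (meson finite_SigmaI finite_atLeastAtMost finite_imageI finite_subset)
qed

lemma finite_TT: "finite (TT m c n)"
  by (rule finite_subset[OF _ finite_VV[of m n]]) (auto simp: TT_def VV_def)

fun cons_child :: "nat ltree \<Rightarrow> nat ltree \<Rightarrow> nat ltree" where
  "cons_child t (LNode c ts) = LNode c (t # ts)"

lemma rec_card:
  assumes i: "1 \<le> i" "i \<le> m" and n: "1 \<le> n"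
  shows "card (TT m i (Suc n)) =
    (\<Sum>(c,k)\<in>{1..i}\<times>{1..n}. card (TT m c k) * card (TT m i (Suc n - k)))"
proof -
  define A where "A = {t. is_A_coloring m B_mat t \<and> lroot t \<le> i \<and> nverts t \<le> n}"
  define S where "S = Sigma A (\<lambda>t. TT m i (Suc n - nverts t))"
  have finA: "finite A"
    by (rule finite_subset[OF _ finite_VV[of m n]]) (auto simp: A_def VV_def)
  have inj: "inj_on (\<lambda>(t,r). cons_child t r) S"
  proof (rule inj_onI, clarify)
    fix t r t' r' assume "cons_child t r = cons_child t' r'"
    then show "t = t' \<and> r = r'" by (cases r; cases r') auto
  qed
  have img: "(\<lambda>(t,r). cons_child t r) ` S = TT m i (Suc n)"
  proof
    show "(\<lambda>(t,r). cons_child t r) ` S \<subseteq> TT m i (Suc n)"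
    proof clarify
      fix t r assume "(t, r) \<in> S"
      then have t: "is_A_coloring m B_mat t" "lroot t \<le> i" "nverts t \<le> n"
        and r: "r \<in> TT m i (Suc n - nverts t)" by (auto simp: S_def A_def)
      obtain c ts where rd: "r = LNode c ts" by (cases r)
      show "cons_child t r \<in> TT m i (Suc n)"
        using t r rd by (auto simp: TT_def B_mat_def)
    qed
  next
    show "TT m i (Suc n) \<subseteq> (\<lambda>(t,r). cons_child t r) ` S"
    proof
      fix C assume C: "C \<in> TT m i (Suc n)"
      obtain c ts where Cd: "C = LNode c ts" by (cases C)
      have ne: "ts \<noteq> []" using C Cd n by (auto simp: TT_def)
      then obtain t ts' where ts: "ts = t # ts'" by (cases ts) auto
      have "nverts t \<le> n" using C Cd ts by (auto simp: TT_def)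
      then have "(t, LNode c ts') \<in> S" using C Cd ts nverts_pos[of t]
        by (auto simp: S_def A_def TT_def B_mat_def)
      moreover have "C = cons_child t (LNode c ts')" using Cd ts by simp
      ultimately show "C \<in> (\<lambda>(t,r). cons_child t r) ` S" by force
    qed
  qed
  have "card (TT m i (Suc n)) = card S"
    using card_image[OF inj] img by simp
  also have "\<dots> = (\<Sum>t\<in>A. card (TT m i (Suc n - nverts t)))"
    unfolding S_def using finA finite_TT by simp
  also have "\<dots> = (\<Sum>ck\<in>{1..i}\<times>{1..n}. \<Sum>t\<in>{t\<in>A. (lroot t, nverts t) = ck}. card (TT m i (Suc n - nverts t)))"
  proof (rule sum.group[symmetric])
    show "finite A" by (rule finA)
    show "finite ({1..i}\<times>{1..n})" by simp
    show "(\<lambda>t. (lroot t, nverts t)) ` A \<subseteq> {1..i}\<times>{1..n}"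
    proof (rule image_subsetI)
      fix t assume "t \<in> A"
      then have t: "is_A_coloring m B_mat t" "lroot t \<le> i" "nverts t \<le> n" by (auto simp: A_def)
      obtain c ts where td: "t = LNode c ts" by (cases t)
      show "(lroot t, nverts t) \<in> {1..i}\<times>{1..n}" using t td nverts_pos[of t] by auto
    qed
  qed
  also have "\<dots> = (\<Sum>(c,k)\<in>{1..i}\<times>{1..n}. card (TT m c k) * card (TT m i (Suc n - k)))"
  proof (rule sum.cong[OF refl], clarify)
    fix c k assume ck: "c \<in> {1..i}" "k \<in> {1..n}"
    have "{t\<in>A. (lroot t, nverts t) = (c,k)} = TT m c k"
      using ck by (auto simp: A_def TT_def)
    then show "(\<Sum>t\<in>{t\<in>A. (lroot t, nverts t) = (c,k)}. card (TT m i (Suc n - nverts t))) =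
         card (TT m c k) * card (TT m i (Suc n - k))"
      by (simp add: TT_def)
  qed
  finally show ?thesis .
qed

definition ff :: "nat \<Rightarrow> nat \<Rightarrow> real fps" where
  "ff m c = Abs_fps (\<lambda>n. real (card (TT m c n)))"

lemma TT0: "TT m c 0 = {}"
proof -
  have "nverts C \<noteq> 0" for C :: "nat ltree" using nverts_pos[of C] by simp
  then show ?thesis by (auto simp: TT_def)
qed

lemma TT1: assumes "1 \<le> c" "c \<le> m" shows "TT m c 1 = {LNode c []}"
proof
  show "TT m c 1 \<subseteq> {LNode c []}"
  proof
    fix C assume C: "C \<in> TT m c 1"
    obtain d ts where Cd: "C = LNode d ts" by (cases C)
    have "sum_list (map nverts ts) = 0" using C Cd by (simp add: TT_def)
    then have "ts = []" using nverts_pos[of "hd ts"]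
      by (cases ts) auto
    then show "C \<in> {LNode c []}" using C Cd by (simp add: TT_def)
  qed
  show "{LNode c []} \<subseteq> TT m c 1" using assms by (simp add: TT_def)
qed

lemma ff_eq:
  assumes i: "1 \<le> i" "i \<le> m"
  shows "ff m i = fps_X + (\<Sum>c=1..i. ff m c) * ff m i"
proof (rule fps_ext)
  fix n
  show "ff m i $ n = (fps_X + (\<Sum>c=1..i. ff m c) * ff m i) $ n"
  proof (cases n)
    case 0
    then show ?thesis by (simp add: ff_def TT0 fps_sum_nth)
  next
    case (Suc n')
    show ?thesis
    proof (cases n')
      case 0
      then show ?thesis using Suc i TT1[OF i] by (simp add: ff_def TT0 fps_sum_nth fps_mult_nth)
    next
      case (Suc n'')
      have n1: "1 \<le> n'" using Suc by simp
      have "((\<Sum>c=1..i. ff m c) * ff m i) $ Suc n' =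
          (\<Sum>j=0..Suc n'. (\<Sum>c=1..i. real (card (TT m c j))) * real (card (TT m i (Suc n' - j))))"
        by (simp add: fps_mult_nth ff_def fps_sum_nth)
      also have "\<dots> = (\<Sum>j=1..n'. (\<Sum>c=1..i. real (card (TT m c j))) * real (card (TT m i (Suc n' - j))))"
      proof -
        have "{0..Suc n'} = insert 0 (insert (Suc n') {1..n'})" by auto
        then show ?thesis by (simp add: TT0)
      qed
      also have "\<dots> = (\<Sum>j=1..n'. \<Sum>c=1..i. real (card (TT m c j) * card (TT m i (Suc n' - j))))"
        by (simp add: sum_distrib_right)
      also have "\<dots> = (\<Sum>c=1..i. \<Sum>j=1..n'. real (card (TT m c j) * card (TT m i (Suc n' - j))))"
        by (rule sum.swap)
      also have "\<dots> = real (\<Sum>(c,k)\<in>{1..i}\<times>{1..n'}. card (TT m c k) * card (TT m i (Suc n' - k)))"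
        by (simp add: sum.cartesian_product of_nat_sum case_prod_beta)
      also have "\<dots> = real (card (TT m i (Suc n')))"
        using rec_card[OF i n1] by simp
      finally show ?thesis using \<open>n = Suc n'\<close> n1 by (simp add: ff_def)
    qed
  qed
qed

lemma F_ser_ff: "F_ser m = ff m m"
  by (rule fps_ext) (simp add: F_ser_def ff_def t_count_TT TT0 not_le)

lemma Pm_1: "Pm (Suc 0) = [:0, 1:]" by (simp add: Pm_def)
lemma Qm_1: "Qm (Suc 0) = 1" by (simp add: Qm_def)
lemma PQ_SS: "Pm (Suc (Suc k)) = Pm (Suc k)^2 + Qm (Suc k)^2 \<and> Qm (Suc (Suc k)) = Pm (Suc k) * Qm (Suc k)"
  by (simp add: Pm_def Qm_def split: prod.splits)

lemma Pm_SS: "Pm (Suc (Suc k)) = Pm (Suc k)^2 + Qm (Suc k)^2"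
  using PQ_SS by blast
lemma Qm_SS: "Qm (Suc (Suc k)) = Pm (Suc k) * Qm (Suc k)"
  using PQ_SS by blast
lemma poly_Pm_SS: "poly (Pm (Suc (Suc k))) y = poly (Pm (Suc k)) y ^2 + poly (Qm (Suc k)) y ^ 2"
  by (simp add: Pm_SS)
lemma poly_Qm_SS: "poly (Qm (Suc (Suc k))) y = poly (Pm (Suc k)) y * poly (Qm (Suc k)) y"
  by (simp add: Qm_SS)

lemma Pm_2: "poly (Pm (Suc (Suc 0))) y = y^2 + (1::'a::comm_ring_1)"
  by (simp add: Pm_def Qm_def numeral_2_eq_2 power2_eq_square)
lemma Qm_2: "poly (Qm (Suc (Suc 0))) y = (y::'a::comm_ring_1)"
  by (simp add: Pm_def Qm_def numeral_2_eq_2)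

lemma pq_main:
  fixes u :: "nat \<Rightarrow> 'a::field"
  assumes rel: "\<And>j. 1 \<le> j \<Longrightarrow> j \<le> m \<Longrightarrow> u j = u (j-1) * (1 + u j ^ 2)"
  shows "1 \<le> k \<Longrightarrow> k \<le> m \<Longrightarrow> poly (Qm (k+1)) (u m) = u (m-k) * poly (Pm (k+1)) (u m)"
proof (induction k rule: dec_induct)
  case base
  have "u m = u (m-1) * (1 + u m ^ 2)" using rel[of m] base by simp
  then show ?case by (simp add: Pm_2 Qm_2 algebra_simps power2_eq_square)
next
  case (step k)
  define P where "P = poly (Pm (k+1)) (u m)"
  have IH: "poly (Qm (k+1)) (u m) = u (m-k) * P" using step by (simp add: P_def)
  have r: "u (m-k) = u (m-k-1) * (1 + u (m-k) ^ 2)" using rel[of "m-k"] step by simp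
  have "poly (Qm (Suc k+1)) (u m) = u (m-k) * P^2"
    using IH by (simp add: P_def poly_Qm_SS power2_eq_square)
  also have "\<dots> = u (m - Suc k) * (P^2 + (u (m-k) * P)^2)"
    by (subst r) (simp add: algebra_simps power2_eq_square)
  also have "\<dots> = u (m - Suc k) * poly (Pm (Suc k+1)) (u m)"
    using IH by (simp add: P_def poly_Pm_SS)
  finally show ?case .
qed

definition phi :: "real fps \<Rightarrow> real fls" where
  "phi a = fps_to_fls (fps_compose a (fps_X ^ 2))"

lemma phi_add: "phi (a + b) = phi a + phi b"
  by (simp add: phi_def fps_compose_add_distrib)
lemma phi_mult: "phi (a * b) = phi a * phi b"
  by (simp add: phi_def fps_compose_mult_distrib fls_times_fps_to_fls)
lemma phi_X: "phi fps_X = fls_X ^ 2"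
  by (simp add: phi_def fps_to_fls_power)

lemma rel_fps:
  assumes j: "1 \<le> j" "j \<le> m"
  shows "ff m j * fps_X = (if j - 1 = 0 then fps_X else ff m (j-1)) * (fps_X + ff m j * ff m j)"
proof -
  define S where "S = (\<Sum>c=1..j-1. ff m c)"
  define g where "g = (if j - 1 = 0 then fps_X else ff m (j-1))"
  have Sj: "(\<Sum>c=1..j. ff m c) = S + ff m j"
  proof -
    obtain j' where jj: "j = Suc j'" using j by (cases j) auto
    show ?thesis unfolding S_def jj by (simp add: sum.cl_ivl_Suc)
  qed
  have e1: "ff m j - S * ff m j = fps_X + ff m j * ff m j"
  proof -
    have "ff m j = fps_X + (S + ff m j) * ff m j" using ff_eq[OF j] Sj by simp
    then show ?thesis by (simp add: algebra_simps)
  qed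
  have e2: "g - S * g = fps_X"
  proof (cases "j - 1 = 0")
    case True
    then show ?thesis by (simp add: g_def S_def)
  next
    case False
    have "ff m (j-1) = fps_X + S * ff m (j-1)" using ff_eq[of "j-1" m] j False by (simp add: S_def)
    then have "ff m (j-1) - S * ff m (j-1) = fps_X" by (metis add_diff_cancel_right')
    then show ?thesis using False by (simp add: g_def)
  qed
  have "ff m j * fps_X = ff m j * (g - S * g)" using e2 by simp
  also have "\<dots> = g * (ff m j - S * ff m j)" by (simp add: algebra_simps)
  also have "\<dots> = g * (fps_X + ff m j * ff m j)" using e1 by simp
  finally show ?thesis by (simp add: g_def)
qed

theorem theorem43:
  fixes m :: nat
  assumes "m \<ge> 1"
  shows "let s = (fls_X :: real fls);
             G = fps_to_fls (fps_compose (F_ser m) (fps_X ^ 2))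
         in s ^ (2 ^ m) * (inverse s * poly (Qm (m + 1)) (G / s) - poly (Pm (m + 1)) (G / s)) = 0"
proof -
  define s where "s = (fls_X :: real fls)"
  have s0: "s \<noteq> 0" by (simp add: s_def)
  define gg where "gg j = (if j = 0 then fps_X else ff m j)" for j
  define u where "u j = phi (gg j) / s" for j
  have rel: "u j = u (j-1) * (1 + u j ^ 2)" if j: "1 \<le> j" "j \<le> m" for j
  proof -
    have "phi (ff m j * fps_X) = phi (gg (j-1) * (fps_X + ff m j * ff m j))"
      using rel_fps[OF j] by (simp add: gg_def)
    then have e: "phi (gg j) * s^2 = phi (gg (j-1)) * (s^2 + phi (gg j) * phi (gg j))"
      using j by (simp add: phi_mult phi_add phi_X gg_def s_def)
    show ?thesis unfolding u_def using e s0
      by (simp add: field_simps power2_eq_square)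
  qed
  have main: "poly (Qm (m+1)) (u m) = u (m-m) * poly (Pm (m+1)) (u m)"
    by (rule pq_main[of m u m]) (use rel assms in auto)
  have p0: "phi (gg 0) = s * s" by (simp add: gg_def phi_X s_def power2_eq_square)
  have u0: "u 0 = s" using s0 unfolding u_def p0 by simp
  have G: "fps_to_fls (fps_compose (F_ser m) (fps_X ^ 2)) / s = u m"
    using assms by (simp add: u_def gg_def phi_def F_ser_ff)
  show ?thesis unfolding Let_def s_def[symmetric] G main using u0 s0 by simp
qed
end
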